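(* For every fixed $c\in(0,1)$, \[ \Pr\bigl[L_n\le c\ln n\bigr]=\exp\bigl(-(K(c)+o(1))\ln n\bigr)\qquad(n\to\infty), \] where $K(c)=\dfrac{(1-c)^2}{8c}$.
   Context: Let $\xi_1,\xi_2,\dots$ be i.i.d. random variables with $\Pr[\xi_i=1]=\Pr[\xi_i=-1]=1/2$, and let $S_t=\sum_{i=1}^t\xi_i$ (simple symmetric random walk, $S_0=0$). Define $L_n=\sum_{i=1}^n S_i^2/i^2$. *)

theory Defs
  imports "HOL-Probability.Probability"
begin

text \<open>A sample path of the first n steps is a list xs of length n with entries in {-1,1};
  under the i.i.d. fair-sign law all 2^n such lists are equally likely.\<close>

definition sign_paths :: "nat \<Rightarrow> real list set" where
  "sign_paths n = {xs. length xs = n \<and> set xs \<subseteq> {-1, 1}}"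

text \<open>Walk position S_t = xi_1 + ... + xi_t (list entry i is xi_(i+1)); S_0 = 0.\<close>
definition walk :: "real list \<Rightarrow> nat \<Rightarrow> real" where
  "walk xs t = (\<Sum>i<t. xs ! i)"

definition Lstat :: "nat \<Rightarrow> real list \<Rightarrow> real" where
  "Lstat n xs = (\<Sum>i=1..n. (walk xs i)^2 / (real i)^2)"

definition small_L_prob :: "real \<Rightarrow> nat \<Rightarrow> real" where
  "small_L_prob c n =
     measure_pmf.prob (pmf_of_set (sign_paths n)) {xs. Lstat n xs \<le> c * ln (real n)}"

definition Krate :: "real \<Rightarrow> real" where
  "Krate c = (1 - c)^2 / (8 * c)"

end

theory Submission
  imports Defs
begin


lemma cosh_real_exp: "cosh (x::real) = (exp x + exp (-x))/2"
  by (simp add: cosh_def)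
lemma sinh_real_exp: "sinh (x::real) = (exp x - exp (-x))/2"
  by (simp add: sinh_def)

lemma tanh_le_self: assumes "(x::real) \<ge> 0" shows "tanh x \<le> x"
proof -
  have "(\<lambda>x. x - tanh x) 0 \<le> (\<lambda>x. x - tanh x) x"
  proof (rule DERIV_nonneg_imp_nondecreasing[OF assms])
    fix y :: real assume "0 \<le> y" "y \<le> x"
    show "\<exists>d. ((\<lambda>x. x - tanh x) has_real_derivative d) (at y) \<and> 0 \<le> d"
      by (rule exI[of _ "1 - (1 - tanh y ^ 2)"]) (auto intro!: derivative_eq_intros)
  qed
  thus ?thesis by simp
qed

lemma tanh_ge_cubic: assumes "(x::real) \<ge> 0" shows "tanh x \<ge> x - x^3/3"
proof -
  have "(\<lambda>x. tanh x - x + x^3/3) 0 \<le> (\<lambda>x. tanh x - x + x^3/3) x"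
  proof (rule DERIV_nonneg_imp_nondecreasing[OF assms])
    fix y :: real assume y: "0 \<le> y" "y \<le> x"
    have "tanh y \<le> y" using tanh_le_self y by auto
    moreover have "tanh y \<ge> 0" using y by simp
    ultimately have "tanh y ^ 2 \<le> y^2" by (simp add: power_mono)
    hence "0 \<le> (1 - tanh y ^ 2) - 1 + 3 * y^2 / 3" by simp
    thus "\<exists>d. ((\<lambda>x. tanh x - x + x^3/3) has_real_derivative d) (at y) \<and> 0 \<le> d"
      by (intro exI[of _ "(1 - tanh y ^ 2) - 1 + 3 * y^2 / 3"]) (auto intro!: derivative_eq_intros simp: power2_eq_square)
  qed
  thus ?thesis by simp
qed

lemma cosh_pos_real: "cosh (x::real) > 0" by (simp add: cosh_real_pos)

lemma lncosh_bound_pos: assumes "(y::real) \<ge> 0" shows "y * tanh y - ln (cosh y) \<le> y^2/2"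
proof -
  have "(\<lambda>y. y^2/2 - y * tanh y + ln (cosh y)) 0 \<le> (\<lambda>y. y^2/2 - y * tanh y + ln (cosh y)) y"
  proof (rule DERIV_nonneg_imp_nondecreasing[OF assms])
    fix z :: real assume z: "0 \<le> z" "z \<le> y"
    have c: "cosh z > 0" by (rule cosh_pos_real)
    have "((\<lambda>y. y^2/2 - y * tanh y + ln (cosh y)) has_real_derivative (z - (tanh z + z * (1 - tanh z ^ 2)) + sinh z / cosh z)) (at z)"
      using c by (auto intro!: derivative_eq_intros simp: power2_eq_square)
    moreover have "z - (tanh z + z * (1 - tanh z ^ 2)) + sinh z / cosh z = z * tanh z ^ 2"
      by (simp add: tanh_def algebra_simps)
    moreover have "z * tanh z ^ 2 \<ge> 0" using z by simp
    ultimately show "\<exists>d. ((\<lambda>y. y^2/2 - y * tanh y + ln (cosh y)) has_real_derivative d) (at z) \<and> 0 \<le> d"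
      by auto
  qed
  thus ?thesis by simp
qed

lemma lncosh_bound: "(y::real) * tanh y - ln (cosh y) \<le> y^2/2"
proof (cases "y \<ge> 0")
  case True thus ?thesis by (rule lncosh_bound_pos)
next
  case False
  hence "(-y) * tanh (-y) - ln (cosh (-y)) \<le> (-y)^2/2" by (intro lncosh_bound_pos) simp
  thus ?thesis by simp
qed

lemma cosh_le_exp_pos: assumes "(x::real) \<ge> 0" shows "cosh x \<le> exp (x^2/2)"
proof -
  have "(\<lambda>x. x^2/2 - ln (cosh x)) 0 \<le> (\<lambda>x. x^2/2 - ln (cosh x)) x"
  proof (rule DERIV_nonneg_imp_nondecreasing[OF assms])
    fix z :: real assume z: "0 \<le> z" "z \<le> x"
    have c: "cosh z > 0" by (rule cosh_pos_real)
    have "((\<lambda>x. x^2/2 - ln (cosh x)) has_real_derivative (z - sinh z / cosh z)) (at z)"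
      using c by (auto intro!: derivative_eq_intros simp: power2_eq_square)
    moreover have "z - sinh z / cosh z \<ge> 0" using tanh_le_self[of z] z by (simp add: tanh_def)
    ultimately show "\<exists>d. ((\<lambda>x. x^2/2 - ln (cosh x)) has_real_derivative d) (at z) \<and> 0 \<le> d"
      by auto
  qed
  hence "ln (cosh x) \<le> x^2/2" by simp
  thus ?thesis using cosh_pos_real[of x] by (metis exp_le_cancel_iff exp_ln)
qed

lemma cosh_le_exp: "cosh (x::real) \<le> exp (x^2/2)"
proof (cases "x \<ge> 0")
  case True thus ?thesis by (rule cosh_le_exp_pos)
next
  case False
  hence "cosh (-x) \<le> exp ((-x)^2/2)" by (intro cosh_le_exp_pos) simp
  thus ?thesis by simp
qed



lemma sign_paths_0: "sign_paths 0 = {[]}"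
  by (auto simp: sign_paths_def)

lemma sign_paths_Suc: "sign_paths (Suc m) = (\<lambda>(x,xs). x # xs) ` ({-1,1} \<times> sign_paths m)"
proof
  show "sign_paths (Suc m) \<subseteq> (\<lambda>(x,xs). x # xs) ` ({-1,1} \<times> sign_paths m)"
  proof
    fix ys assume "ys \<in> sign_paths (Suc m)"
    then obtain x xs where "ys = x # xs" "length xs = m" "x \<in> {-1,1}" "set xs \<subseteq> {-1,1}"
      unfolding sign_paths_def by (cases ys) auto
    thus "ys \<in> (\<lambda>(x,xs). x # xs) ` ({-1,1} \<times> sign_paths m)"
      unfolding sign_paths_def by (auto intro!: image_eqI[of _ _ "(x,xs)"])
  qed
qed (auto simp: sign_paths_def)

lemma finite_sign_paths: "finite (sign_paths m)"
  by (induction m) (auto simp: sign_paths_0 sign_paths_Suc)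

lemma inj_cons: "inj_on (\<lambda>(x,xs). x # xs) A"
  by (auto simp: inj_on_def)

lemma card_sign_paths: "card (sign_paths m) = 2 ^ m"
proof (induction m)
  case 0 thus ?case by (simp add: sign_paths_0)
next
  case (Suc m)
  have "card (sign_paths (Suc m)) = card ({-1::real,1} \<times> sign_paths m)"
    unfolding sign_paths_Suc by (rule card_image[OF inj_cons])
  also have "\<dots> = 2 * 2^m" using Suc by (simp add: card_cartesian_product)
  finally show ?case by simp
qed

lemma sign_paths_ne: "sign_paths m \<noteq> {}"
proof -
  have "replicate m 1 \<in> sign_paths m" by (auto simp: sign_paths_def)
  thus ?thesis by auto
qed

lemma sum_sign_paths_Suc:
  "(\<Sum>ys\<in>sign_paths (Suc m). f ys) = (\<Sum>xs\<in>sign_paths m. f (1 # xs)) + (\<Sum>xs\<in>sign_paths m. f ((-1) # xs))"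
proof -
  have "(\<Sum>ys\<in>sign_paths (Suc m). f ys) = (\<Sum>p\<in>{-1::real,1} \<times> sign_paths m. f ((\<lambda>(x,xs). x # xs) p))"
    unfolding sign_paths_Suc by (simp add: sum.reindex[OF inj_cons] comp_def)
  also have "\<dots> = (\<Sum>x\<in>{-1::real,1}. \<Sum>xs\<in>sign_paths m. f (x # xs))"
    using sum.cartesian_product[of "\<lambda>x xs. f (x # xs)" "sign_paths m" "{-1::real,1}"]
    by (simp add: case_prod_unfold)
  also have "\<dots> = (\<Sum>xs\<in>sign_paths m. f (1 # xs)) + (\<Sum>xs\<in>sign_paths m. f ((-1) # xs))"
    by (simp add: add.commute)
  finally show ?thesis .
qed

lemma walk_0 [simp]: "walk xs 0 = 0" by (simp add: walk_def)

lemma walk_Cons_Suc: "walk (x # xs) (Suc j) = x + walk xs j"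
  unfolding walk_def by (subst sum.lessThan_Suc_shift) simp

lemma walk_abs_le: "set xs \<subseteq> {-1,1} \<Longrightarrow> j \<le> length xs \<Longrightarrow> \<bar>walk xs j\<bar> \<le> j"
proof (induction xs arbitrary: j)
  case Nil thus ?case by (simp add: walk_def)
next
  case (Cons x xs)
  show ?case
  proof (cases j)
    case 0 thus ?thesis by simp
  next
    case (Suc i)
    have "i \<le> length xs" using Cons.prems Suc by simp
    hence "\<bar>walk xs i\<bar> \<le> i" using Cons.IH Cons.prems by simp
    moreover have "\<bar>x\<bar> = 1" using Cons.prems by auto
    ultimately show ?thesis using Suc by (simp add: walk_Cons_Suc abs_triangle_ineq[THEN order_trans])
  qed
qed

definition Fw :: "(nat \<Rightarrow> real) \<Rightarrow> nat \<Rightarrow> nat \<Rightarrow> real \<Rightarrow> real" where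
  "Fw w m t S = (\<Sum>xs\<in>sign_paths m. exp (- (\<Sum>j<m. w (t + Suc j) * (S + walk xs (Suc j))^2))) / 2^m"

lemma Fw_0 [simp]: "Fw w 0 t S = 1"
  by (simp add: Fw_def sign_paths_0)

lemma Fw_pos: "Fw w m t S > 0"
  unfolding Fw_def using finite_sign_paths sign_paths_ne
  by (intro divide_pos_pos sum_pos) auto

lemma Fw_Suc: "Fw w (Suc m) t S =
   (exp (- (w (Suc t) * (S + 1)^2)) * Fw w m (Suc t) (S + 1) +
    exp (- (w (Suc t) * (S - 1)^2)) * Fw w m (Suc t) (S - 1)) / 2"
proof -
  have e: "exp (- (\<Sum>j<Suc m. w (t + Suc j) * (S + walk (x # xs) (Suc j))^2)) =
        exp (- (w (Suc t) * (S + x)^2)) * exp (- (\<Sum>j<m. w (Suc t + Suc j) * ((S + x) + walk xs (Suc j))^2))"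
    for x xs
    by (subst sum.lessThan_Suc_shift) (simp add: walk_Cons_Suc exp_add[symmetric] algebra_simps)
  show ?thesis
    unfolding Fw_def sum_sign_paths_Suc e
    by (simp add: sum_distrib_left[symmetric] field_simps)
qed



lemma step_upper: fixes q S :: real shows "(exp (-(q*(S+1)^2)) + exp (-(q*(S-1)^2)))/2 \<le> exp (-q - (q - 2*q^2) * S^2)"
proof -
  have "(exp (-(q*(S+1)^2)) + exp (-(q*(S-1)^2)))/2 = exp (-q - q*S^2) * cosh (2*q*S)"
  proof -
    have "exp (-(q*(S+1)^2)) = exp (-q - q*S^2) * exp (-(2*q*S))"
      by (simp add: exp_add[symmetric] power2_eq_square algebra_simps)
    moreover have "exp (-(q*(S-1)^2)) = exp (-q - q*S^2) * exp (2*q*S)"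
      by (simp add: exp_add[symmetric] power2_eq_square algebra_simps)
    ultimately show ?thesis by (simp add: cosh_real_exp algebra_simps)
  qed
  also have "\<dots> \<le> exp (-q - q*S^2) * exp ((2*q*S)^2/2)"
    by (intro mult_left_mono cosh_le_exp) simp
  also have "\<dots> = exp (-q - (q - 2*q^2) * S^2)"
    by (simp add: exp_add[symmetric] power2_eq_square algebra_simps)
  finally show ?thesis .
qed

lemma upper_abstract:
  assumes wle: "\<And>j. w' j \<le> w j"
    and gq: "\<And>t. t < N \<Longrightarrow> g t \<le> (w' (Suc t) + g (Suc t)) - 2*(w' (Suc t) + g (Suc t))^2"
    and gN: "g N \<le> 0"
  shows "t \<le> N \<Longrightarrow> Fw w (N-t) t S \<le> exp (-(\<Sum>j\<in>{t<..N}. w' j + g j) - g t * S^2)"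
proof (induction "N - t" arbitrary: t S)
  case 0
  hence "t = N" by simp
  have "- g N * S^2 \<ge> 0" using gN by (simp add: mult_nonpos_nonneg)
  thus ?case using \<open>t = N\<close> by simp
next
  case (Suc k)
  define s where "s = Suc t"
  have tN: "t < N" using Suc by simp
  have ks: "k = N - s" using Suc s_def by simp
  have sN: "s \<le> N" using tN s_def by simp
  define R where "R = (\<Sum>j\<in>{s<..N}. w' j + g j)"
  define q where "q = w' s + g s"
  have IH: "Fw w (N - s) s S' \<le> exp (- R - g s * S'^2)" for S'
    using Suc.hyps(1)[of s S'] ks sN R_def by simp
  have e: "exp (- (w s * S'^2)) * Fw w (N - s) s S' \<le> exp (-R) * exp (-(q * S'^2))" for S'
  proof -
    have "exp (- (w s * S'^2)) * Fw w (N - s) s S' \<le> exp (- (w' s * S'^2)) * exp (- R - g s * S'^2)"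
      by (intro mult_mono IH) (auto intro: mult_right_mono wle simp: less_imp_le[OF Fw_pos])
    also have "\<dots> = exp (-R) * exp (-(q * S'^2))"
      by (simp add: q_def exp_add[symmetric] algebra_simps)
    finally show ?thesis .
  qed
  have "Fw w (N - t) t S = Fw w (Suc (N - s)) t S" using tN s_def by (simp add: Suc_diff_Suc)
  also have "\<dots> = (exp (- (w s * (S + 1)^2)) * Fw w (N - s) s (S + 1) +
    exp (- (w s * (S - 1)^2)) * Fw w (N - s) s (S - 1)) / 2" unfolding Fw_Suc s_def ..
  also have "\<dots> \<le> (exp (-R) * exp (-(q * (S+1)^2)) + exp (-R) * exp (-(q * (S-1)^2))) / 2"
    by (intro divide_right_mono add_mono e) simp
  also have "\<dots> = exp (-R) * ((exp (-(q * (S+1)^2)) + exp (-(q * (S-1)^2))) / 2)"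
    by (simp add: algebra_simps)
  also have "\<dots> \<le> exp (-R) * exp (-q - (q - 2*q^2) * S^2)"
    by (intro mult_left_mono step_upper) simp
  also have "\<dots> \<le> exp (-R) * exp (-q - g t * S^2)"
    using gq[OF tN] unfolding q_def s_def[symmetric]
    by (intro mult_left_mono) (auto intro!: mult_right_mono)
  also have "\<dots> = exp (-(\<Sum>j\<in>{t<..N}. w' j + g j) - g t * S^2)"
  proof -
    have "{t<..N} = insert s {s<..N}" using sN s_def by auto
    hence "(\<Sum>j\<in>{t<..N}. w' j + g j) = q + R" unfolding R_def q_def by simp
    thus ?thesis by (simp add: exp_add[symmetric])
  qed
  finally show ?case .
qed



lemma ineqU:
  fixes t N lam beta eta :: real
  assumes t1: "t \<ge> 1" and sN: "t + 1 \<le> N" and b: "beta > 0" and eta: "eta = lam - beta - 2*beta^2" "eta > 0"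
    and tbig: "t \<ge> (beta + 4*beta*lam + 2*lam^2)/eta"
  shows "beta*(1/t - 1/N) \<le> (lam/(t+1)^2 + beta*(1/(t+1) - 1/N)) - 2*(lam/(t+1)^2 + beta*(1/(t+1) - 1/N))^2"
proof -
  define s where "s = t + 1"
  define q where "q = lam/s^2 + beta*(1/s - 1/N)"
  define Q where "Q = lam/s^2 + beta/s"
  have lam: "lam > 0" using eta b by (smt (verit) zero_le_power2 mult_nonneg_nonneg)
  have s1: "s \<ge> 1" "s > 0" using t1 s_def by auto
  have Npos: "N > 0" using sN t1 by simp
  have "beta*(1/s - 1/N) \<ge> 0" using b sN s_def Npos s1
    by (intro mult_nonneg_nonneg) (auto simp: field_simps)
  hence q0: "q \<ge> 0" unfolding q_def using lam s1 by simp
  have qQ: "q \<le> Q" unfolding q_def Q_def using b Npos by (simp add: field_simps)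
  have q2: "q^2 \<le> Q^2" using q0 qQ by (simp add: power_mono)
  have key: "beta * s / t + 2 * (lam/s + beta)^2 \<le> lam"
  proof -
    have a1: "beta * s / t = beta + beta / t" using s_def t1 by (simp add: field_simps)
    have a2: "(lam/s + beta)^2 = beta^2 + (lam/s)*(lam/s + 2*beta)" by (simp add: power2_eq_square algebra_simps)
    have a3: "lam/s \<le> lam/t" using s_def t1 lam by (intro divide_left_mono) auto
    have a4: "lam/s \<le> lam" using s1 lam by (simp add: field_simps)
    have a5: "(lam/s)*(lam/s + 2*beta) \<le> (lam/t)*(lam + 2*beta)"
      using a3 a4 lam s1 b t1 by (intro mult_mono) auto
    have a6: "beta/t + 2*((lam/t)*(lam + 2*beta)) = (beta + 4*beta*lam + 2*lam^2)/t"
      by (simp add: add_divide_distrib power2_eq_square algebra_simps)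
    have a7: "(beta + 4*beta*lam + 2*lam^2)/t \<le> eta"
      using tbig t1 eta(2) by (simp add: field_simps)
    show ?thesis using a1 a2 a5 a6 a7 eta(1) by linarith
  qed
  have "beta*(1/t - 1/N) \<le> q - 2*q^2"
  proof -
    have "2*q^2 \<le> 2*Q^2" using q2 by simp
    also have "2*Q^2 = 2*(lam/s + beta)^2 / s^2" unfolding Q_def using s1 by (simp add: field_simps power2_eq_square)
    also have "\<dots> \<le> (lam - beta * s / t) / s^2" using key s1 by (intro divide_right_mono) auto
    also have "\<dots> = lam/s^2 + beta/s - beta/t"
    proof -
      have "beta/s - beta/t = - beta / (t * s)" using s_def t1 by (simp add: field_simps)
      moreover have "(lam - beta * s / t) / s^2 = lam/s^2 - beta / (t * s)" using s1 t1
        by (simp add: diff_divide_distrib power2_eq_square)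
      ultimately show ?thesis by simp
    qed
    finally have "2*q^2 \<le> lam/s^2 + beta/s - beta/t" .
    thus ?thesis unfolding q_def by (simp add: algebra_simps)
  qed
  thus ?thesis unfolding q_def s_def .
qed



lemma harm_lower:
  assumes "t0 \<ge> (1::nat)"
  shows "ln (real N + 1) - ln (real t0) \<le> (\<Sum>j\<in>{t0..N}. 1 / real j)"
proof (induction N)
  case 0
  thus ?case using assms by simp
next
  case (Suc N)
  show ?case
  proof (cases "Suc N < t0")
    case True
    hence "ln (real (Suc N) + 1) \<le> ln (real t0)" using assms by simp
    moreover have "{t0..Suc N} = {}" using True by auto
    ultimately show ?thesis by simp
  next
    case False
    hence eq: "{t0..Suc N} = insert (Suc N) {t0..N}" by auto
    have x: "(real (Suc N) + 1) / (real N + 1) = 1 + 1 / real (Suc N)"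
      by (simp add: field_simps)
    have "ln (real (Suc N) + 1) - ln (real N + 1) = ln ((real (Suc N) + 1) / (real N + 1))"
      by (subst ln_div) auto
    also have "\<dots> = ln (1 + 1 / real (Suc N))" by (simp only: x)
    also have "\<dots> \<le> 1 / real (Suc N)" by (rule ln_add_one_self_le_self) simp
    finally show ?thesis unfolding eq using Suc.IH by simp
  qed
qed

lemma lap_upper:
  assumes b: "beta > 0" and eta: "lam - beta - 2*beta^2 > 0"
  shows "\<exists>C. \<forall>N\<ge>1. Fw (\<lambda>j. lam/(real j)^2) N 0 0 \<le> exp (- beta * ln (real N) + C)"
proof -
  define eta where "eta = lam - beta - 2*beta^2"
  have lam: "lam > 0" using eta b by (smt (verit) zero_le_power2 mult_nonneg_nonneg)
  define t0 :: nat where "t0 = nat \<lceil>max 1 (max (2*beta) ((beta + 4*beta*lam + 2*lam^2)/eta))\<rceil>"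
  have t0a: "real t0 \<ge> 1" "real t0 \<ge> 2*beta" "real t0 \<ge> (beta + 4*beta*lam + 2*lam^2)/eta"
    unfolding t0_def by linarith+
  have t01: "t0 \<ge> 1" using t0a by simp
  show ?thesis
  proof (intro exI allI impI)
    fix N :: nat assume N1: "N \<ge> 1"
    define w' where "w' = (\<lambda>j::nat. if t0 < j then lam/(real j)^2 else 0)"
    define g where "g = (\<lambda>t::nat. if t0 \<le> t then beta*(1/real t - 1/real N) else 0)"
    have wle: "w' j \<le> lam/(real j)^2" for j unfolding w'_def using lam by simp
    have gN: "g N \<le> 0" unfolding g_def by simp
    have gq: "g t \<le> (w' (Suc t) + g (Suc t)) - 2*(w' (Suc t) + g (Suc t))^2" if tN: "t < N" for t
    proof (cases "t0 \<le> t")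
      case True
      have "t \<ge> 1" using True t01 by simp
      have "beta*(1/real t - 1/real N) \<le> (lam/(real t+1)^2 + beta*(1/(real t+1) - 1/real N)) - 2*(lam/(real t+1)^2 + beta*(1/(real t+1) - 1/real N))^2"
        by (rule ineqU[where eta=eta]) (use \<open>t \<ge> 1\<close> tN b eta t0a True in \<open>auto simp: eta_def\<close>)
      thus ?thesis unfolding w'_def g_def using True by (simp add: add.commute)
    next
      case False
      show ?thesis
      proof (cases "Suc t = t0")
        case True
        define q where "q = beta*(1/real t0 - 1/real N)"
        have q0: "q \<ge> 0" unfolding q_def using b tN True by (intro mult_nonneg_nonneg) (auto simp: field_simps)
        have "q \<le> beta / real t0" unfolding q_def using b by (simp add: field_simps)
        also have "\<dots> \<le> 1/2" using t0a b t01 by (simp add: field_simps)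
        finally have "q \<le> 1/2" .
        hence "2*q*q \<le> 1*q" using q0 by (intro mult_right_mono) auto
        hence "0 \<le> q - 2*q^2" by (simp add: power2_eq_square)
        thus ?thesis unfolding w'_def g_def using True False by (simp add: q_def)
      next
        case False2: False
        thus ?thesis unfolding w'_def g_def using False by simp
      qed
    qed
    have main: "Fw (\<lambda>j. lam/(real j)^2) N 0 0 \<le> exp (-(\<Sum>j\<in>{0<..N}. w' j + g j) - g 0 * 0^2)"
      using upper_abstract[of w' "\<lambda>j. lam/(real j)^2" N g 0 0] wle gq gN by simp
    have nn: "w' j + g j \<ge> 0" if "j \<le> N" for j
    proof -
      have "w' j \<ge> 0" unfolding w'_def using lam by simp
      moreover have "g j \<ge> 0" unfolding g_def using b that t01
        by (auto intro!: mult_nonneg_nonneg simp: field_simps)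
      ultimately show ?thesis by simp
    qed
    have "(\<Sum>j\<in>{t0..N}. g j) \<le> (\<Sum>j\<in>{0<..N}. w' j + g j)"
    proof -
      have "(\<Sum>j\<in>{t0..N}. g j) \<le> (\<Sum>j\<in>{t0..N}. w' j + g j)"
        using lam by (intro sum_mono) (simp add: w'_def)
      also have "\<dots> \<le> (\<Sum>j\<in>{0<..N}. w' j + g j)"
        using t01 nn by (intro sum_mono2) auto
      finally show ?thesis .
    qed
    moreover have "(\<Sum>j\<in>{t0..N}. g j) = beta * (\<Sum>j\<in>{t0..N}. 1 / real j) - beta * (card {t0..N} / real N)"
      unfolding g_def by (simp add: sum_distrib_left[symmetric] sum_subtractf right_diff_distrib) (simp add: sum_distrib_left)
    moreover have "beta * (card {t0..N} / real N) \<le> beta * 1"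
      using N1 t01 b by (intro mult_left_mono) (auto simp: field_simps)
    moreover have "beta * (ln (real N + 1) - ln (real t0)) \<le> beta * (\<Sum>j\<in>{t0..N}. 1 / real j)"
      using harm_lower[OF t01, of N] b by (intro mult_left_mono) auto
    moreover have "beta * ln (real N) \<le> beta * ln (real N + 1)" using N1 b by (intro mult_left_mono) auto
    ultimately have "beta * ln (real N) - beta * ln (real t0) - beta \<le> (\<Sum>j\<in>{0<..N}. w' j + g j)"
      by (simp only: right_diff_distrib)
    hence "exp (-(\<Sum>j\<in>{0<..N}. w' j + g j) - g 0 * 0^2) \<le> exp (- beta * ln (real N) + (beta * ln (real t0) + beta))"
      by simp
    with main show "Fw (\<lambda>j. lam/(real j)^2) N 0 0 \<le> exp (- beta * ln (real N) + (beta * ln (real t0) + beta))"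
      by linarith
  qed
qed



lemma exp_convex2:
  fixes p u v :: real assumes "0 \<le> p" "p \<le> 1"
  shows "exp (p * u + (1 - p) * v) \<le> p * exp u + (1-p) * exp v"
proof -
  define m where "m = p * u + (1 - p) * v"
  have "exp m * (1 + (u - m)) \<le> exp m * exp (u - m)"
    by (intro mult_left_mono exp_ge_add_one_self) simp
  hence 1: "exp m * (1 + (u - m)) \<le> exp u" by (simp add: exp_add[symmetric])
  have "exp m * (1 + (v - m)) \<le> exp m * exp (v - m)"
    by (intro mult_left_mono exp_ge_add_one_self) simp
  hence 2: "exp m * (1 + (v - m)) \<le> exp v" by (simp add: exp_add[symmetric])
  have "p * (exp m * (1 + (u - m))) + (1-p) * (exp m * (1 + (v - m))) \<le> p * exp u + (1-p) * exp v"
    using assms 1 2 by (intro add_mono mult_left_mono) auto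
  moreover have "p * (exp m * (1 + (u - m))) + (1-p) * (exp m * (1 + (v - m))) = exp m"
    unfolding m_def by (simp add: algebra_simps)
  ultimately show ?thesis unfolding m_def by simp
qed

lemma two_point:
  fixes A B y :: real
  defines "p \<equiv> (1 - tanh y)/2"
  shows "exp (p*A + (1-p)*B - y^2/2) \<le> (exp A + exp B)/2"
proof -
  have c: "cosh y > 0" by (rule cosh_pos_real)
  have tm: "1 - tanh y = exp (-y) / cosh y"
    using c by (simp add: tanh_def field_simps cosh_real_exp sinh_real_exp)
  have tp: "1 + tanh y = exp y / cosh y"
    using c by (simp add: tanh_def field_simps cosh_real_exp sinh_real_exp)
  have p01: "0 \<le> p" "p \<le> 1" unfolding p_def using tanh_real_bounds[of y] by auto
  have ea: "exp A / 2 = p * exp (A + y + ln (cosh y))"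
    unfolding p_def tm using c by (simp add: exp_add exp_minus field_simps)
  have eb: "exp B / 2 = (1-p) * exp (B - y + ln (cosh y))"
  proof -
    have "1 - p = (1 + tanh y)/2" unfolding p_def by (simp add: field_simps)
    also have "\<dots> = exp y / (2 * cosh y)" unfolding tp by simp
    finally have omp: "1 - p = exp y / (2 * cosh y)" .
    have "exp (B - y + ln (cosh y)) = exp B * cosh y / exp y" using c by (simp add: exp_add exp_diff)
    thus ?thesis unfolding omp using c by (simp add: field_simps)
  qed
  have "p*(A + y + ln (cosh y)) + (1-p)*(B - y + ln (cosh y)) = p*A + (1-p)*B - y * tanh y + ln (cosh y)"
    unfolding p_def by (simp add: field_simps)
  also have "\<dots> \<ge> p*A + (1-p)*B - y^2/2" using lncosh_bound[of y] by simp
  finally have "exp (p*A + (1-p)*B - y^2/2) \<le> exp (p*(A + y + ln (cosh y)) + (1-p)*(B - y + ln (cosh y)))"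
    by simp
  also have "\<dots> \<le> p * exp (A + y + ln (cosh y)) + (1-p) * exp (B - y + ln (cosh y))"
    by (rule exp_convex2[OF p01])
  also have "\<dots> = (exp A + exp B)/2" using ea eb by simp
  finally show ?thesis .
qed

lemma lower_abstract:
  assumes step: "\<And>t S. t0 \<le> t \<Longrightarrow> t < N \<Longrightarrow>
      (1 - tanh (y t S))/2 * (w (Suc t) * (S+1)^2 + Phi (Suc t) (S+1)) +
      (1 - (1 - tanh (y t S))/2) * (w (Suc t) * (S-1)^2 + Phi (Suc t) (S-1)) + (y t S)^2/2 \<le> Phi t S"
    and PhiN: "\<And>S. Phi N S \<ge> 0"
  shows "t0 \<le> t \<Longrightarrow> t \<le> N \<Longrightarrow> Fw w (N-t) t S \<ge> exp (- Phi t S)"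
proof (induction "N - t" arbitrary: t S)
  case 0
  hence "t = N" by simp
  thus ?case using PhiN[of S] by simp
next
  case (Suc k)
  define s where "s = Suc t"
  have tN: "t < N" using Suc by simp
  have ks: "k = N - s" using Suc s_def by simp
  have sN: "s \<le> N" "t0 \<le> s" using tN s_def Suc by auto
  have IH: "exp (- Phi s S') \<le> Fw w (N - s) s S'" for S'
    using Suc.hyps(1)[of s S'] ks sN by simp
  define p where "p = (1 - tanh (y t S))/2"
  define A where "A = - (w s * (S+1)^2 + Phi s (S+1))"
  define B where "B = - (w s * (S-1)^2 + Phi s (S-1))"
  have e: "exp (- (w s * S'^2 + Phi s S')) \<le> exp (- (w s * S'^2)) * Fw w (N - s) s S'" for S'
  proof -
    have "exp (- (w s * S'^2 + Phi s S')) = exp (- (w s * S'^2)) * exp (- Phi s S')"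
      by (simp add: exp_add[symmetric])
    also have "\<dots> \<le> exp (- (w s * S'^2)) * Fw w (N - s) s S'"
      by (intro mult_left_mono IH) simp
    finally show ?thesis .
  qed
  have st: "p * (w s * (S+1)^2 + Phi s (S+1)) + (1-p) * (w s * (S-1)^2 + Phi s (S-1)) + (y t S)^2/2 \<le> Phi t S"
    using step[OF Suc.prems(1) tN] unfolding p_def s_def .
  have "p*A + (1-p)*B = - (p * (w s * (S+1)^2 + Phi s (S+1)) + (1-p) * (w s * (S-1)^2 + Phi s (S-1)))"
    unfolding A_def B_def by (simp add: algebra_simps)
  hence "- Phi t S \<le> p*A + (1-p)*B - (y t S)^2/2" using st by linarith
  hence "exp (- Phi t S) \<le> exp (p*A + (1-p)*B - (y t S)^2/2)" by simp
  also have "\<dots> \<le> (exp A + exp B)/2" unfolding p_def by (rule two_point)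
  also have "\<dots> \<le> (exp (- (w s * (S + 1)^2)) * Fw w (N - s) s (S + 1) +
    exp (- (w s * (S - 1)^2)) * Fw w (N - s) s (S - 1)) / 2"
    unfolding A_def B_def by (intro divide_right_mono add_mono e) simp
  also have "\<dots> = Fw w (Suc (N - s)) t S" unfolding Fw_Suc s_def ..
  also have "Suc (N - s) = N - t" using tN s_def by simp
  finally show ?case .
qed


lemma c2_identity:
  fixes a s k lam b :: real assumes "s > 0" "lam = k + 2 * k^2" "b = (a-k) * (1+4 * k)/6"
  shows "(lam/s^2 + a/s) * (1 - 4 * (k/s)) + 6 * (b/s^2) + 2 * (k/s)^2 = a * (s+1)/s^2 - 4 * k * lam/s^3"
proof -
  have e: "6 * (b/s^2) = (a + 4 * a * k - k - 4 * k^2)/s^2" using assms by (simp add: algebra_simps power2_eq_square)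
  show ?thesis unfolding e assms(2) using assms(1) by (simp add: field_simps power2_eq_square power3_eq_cube)
qed

lemma S_tanh_nonneg: assumes "(k::real) \<ge> 0" shows "S * tanh (k * S) \<ge> 0"
proof (cases "S \<ge> 0")
  case True thus ?thesis using assms by (simp add: mult_nonneg_nonneg)
next
  case False
  hence "k * S \<le> 0" using assms by (simp add: mult_nonneg_nonpos)
  hence "tanh (k * S) \<le> 0" by simp
  thus ?thesis using False by (simp add: mult_nonpos_nonpos)
qed

lemma S_tanh_lower_pos:
  fixes q S :: real assumes "q \<ge> 0" "S \<ge> 0"
  shows "S * tanh (2 * q * S) \<ge> 2 * q * S^2 - 8/3 * q^3 * S^4"
proof -
  have "tanh (2 * q * S) \<ge> 2 * q * S - (2 * q * S)^3/3" using tanh_ge_cubic assms by simp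
  hence "S * tanh (2 * q * S) \<ge> S * (2 * q * S - (2 * q * S)^3/3)" using assms by (intro mult_left_mono) auto
  thus ?thesis by (simp add: algebra_simps power2_eq_square power3_eq_cube power4_eq_xxxx)
qed

lemma S_tanh_lower:
  fixes q S :: real assumes "q \<ge> 0"
  shows "S * tanh (2 * q * S) \<ge> 2 * q * S^2 - 8/3 * q^3 * S^4"
proof (cases "S \<ge> 0")
  case True thus ?thesis using S_tanh_lower_pos assms by blast
next
  case False
  hence "(-S) * tanh (2 * q * (-S)) \<ge> 2 * q * (-S)^2 - 8/3 * q^3 * (-S)^4" using S_tanh_lower_pos[of q "-S"] assms by simp
  thus ?thesis by simp
qed

lemma ineqL:
  fixes S t k a b lam :: real
  assumes t1: "t \<ge> 1" and k: "k > 0" and a: "a > k" and lam: "lam = k + 2 * k^2"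
    and bdef: "b = (a-k) * (1+4 * k)/6" and tbig: "t + 1 \<ge> 16/3 * k^3 * (lam+a)/b"
  defines "p \<equiv> (1 - tanh (2 * k * S/(t+1)))/2"
  shows "p * ((lam/(t+1)^2 + a/(t+1)) * (S+1)^2 + b/(t+1)^2 * (S+1)^4) +
         (1-p) * ((lam/(t+1)^2 + a/(t+1)) * (S-1)^2 + b/(t+1)^2 * (S-1)^4) + (2 * k * S/(t+1))^2/2
       \<le> a/t * S^2 + b/t^2 * S^4 + (lam/(t+1)^2 + a/(t+1)) + b/(t+1)^2"
proof -
  define s where "s = t + 1"
  have s: "s > 0" "s \<ge> 1" "s = t + 1" using t1 s_def by auto
  define q where "q = k / s"
  define W where "W = lam/s^2 + a/s"
  define B where "B = b/s^2"
  define tau where "tau = tanh (2 * q * S)"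
  have lampos: "lam > 0" using lam k by (simp add: add_pos_nonneg)
  have "(a-k) * (1+4 * k) > 0" using a k by (intro mult_pos_pos) auto
  hence bpos: "b > 0" using bdef by simp
  have q0: "q \<ge> 0" using k s unfolding q_def by simp
  have W0: "W \<ge> 0" using lampos a k s unfolding W_def by simp
  have B0: "B \<ge> 0" using bpos unfolding B_def by simp
  have ytau: "2 * k * S/(t+1) = 2 * q * S" unfolding q_def s_def by simp
  have pdef: "p = (1 - tau)/2" unfolding p_def tau_def ytau ..
  have id: "p * (W * (S+1)^2 + B * (S+1)^4) + (1-p) * (W * (S-1)^2 + B * (S-1)^4) + (2 * q * S)^2/2 =
      W * (S^2 + 1 - 2 * (S * tau)) + B * (S^4 + 6 * S^2 + 1 - 4 * S^2 * (S * tau) - 4 * (S * tau)) + 2 * q^2 * S^2"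
    unfolding pdef by (simp add: algebra_simps power2_eq_square power4_eq_xxxx)
  have st0: "S * tau \<ge> 0" unfolding tau_def using S_tanh_nonneg[of "2 * q" S] q0 by (simp add: mult.assoc)
  have st1: "S * tau \<ge> 2 * q * S^2 - 8/3 * q^3 * S^4" unfolding tau_def using S_tanh_lower[OF q0] .
  have w1: "W * (S^2 + 1 - 2 * (S * tau)) \<le> W * (S^2 + 1 - 4 * q * S^2 + 16/3 * q^3 * S^4)"
    using st1 W0 by (intro mult_left_mono) auto
  have w2: "B * (S^4 + 6 * S^2 + 1 - 4 * S^2 * (S * tau) - 4 * (S * tau)) \<le> B * (S^4 + 6 * S^2 + 1)"
  proof -
    have "S^2 * (S * tau) \<ge> 0" using st0 by simp
    hence "S^4 + 6 * S^2 + 1 - 4 * S^2 * (S * tau) - 4 * (S * tau) \<le> S^4 + 6 * S^2 + 1" using st0 by linarith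
    thus ?thesis using B0 by (rule mult_left_mono)
  qed
  have L1: "p * (W * (S+1)^2 + B * (S+1)^4) + (1-p) * (W * (S-1)^2 + B * (S-1)^4) + (2 * q * S)^2/2 \<le>
     S^2 * (W * (1 - 4 * q) + 6 * B + 2 * q^2) + S^4 * (16/3 * q^3 * W + B) + (W + B)"
  proof -
    have "W * (S^2 + 1 - 4 * q * S^2 + 16/3 * q^3 * S^4) + B * (S^4 + 6 * S^2 + 1) + 2 * q^2 * S^2 =
      S^2 * (W * (1 - 4 * q) + 6 * B + 2 * q^2) + S^4 * (16/3 * q^3 * W + B) + (W + B)"
      by (simp add: algebra_simps)
    thus ?thesis unfolding id using w1 w2 by linarith
  qed
  have c2: "W * (1 - 4 * q) + 6 * B + 2 * q^2 \<le> a/t"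
  proof -
    have "W * (1 - 4 * q) + 6 * B + 2 * q^2 = a * (s+1)/s^2 - 4 * k * lam/s^3"
      unfolding W_def B_def q_def by (rule c2_identity[OF s(1) lam bdef])
    also have "\<dots> \<le> a * (s+1)/s^2" using k lampos s by simp
    also have "\<dots> \<le> a/t"
    proof -
      have "t * (s+1) \<le> s^2" using s by (simp add: power2_eq_square algebra_simps)
      hence "a * (t * (s+1)) \<le> a * s^2" using a k by (intro mult_left_mono) auto
      thus ?thesis using s t1 by (simp add: field_simps)
    qed
    finally show ?thesis .
  qed
  have c4: "16/3 * q^3 * W + B \<le> b/t^2"
  proof -
    have Wle: "W \<le> (lam + a)/s"
    proof -
      have "lam/s^2 \<le> lam/s" using s lampos by (intro divide_left_mono) (auto simp: power2_eq_square)
      thus ?thesis unfolding W_def by (simp add: add_divide_distrib)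
    qed
    have "16/3 * q^3 * W \<le> 16/3 * q^3 * ((lam + a)/s)" using Wle q0 by (intro mult_left_mono) auto
    also have "\<dots> = (16/3 * k^3 * (lam+a)/b) * b / s^4" unfolding q_def using bpos s(1)
      by (simp add: field_simps power3_eq_cube power4_eq_xxxx)
    also have "\<dots> \<le> s * b / s^4" using tbig s bpos by (intro divide_right_mono mult_right_mono) auto
    also have "\<dots> = b / s^3" using s(1) by (simp add: field_simps power3_eq_cube power4_eq_xxxx)
    finally have 1: "16/3 * q^3 * W \<le> b / s^3" .
    have "b / s^3 + b / s^2 \<le> b / t^2"
    proof -
      have "t^2 * (1 + s) \<le> s^3" using s t1 by (simp add: power2_eq_square power3_eq_cube algebra_simps)
      hence "b * (t^2 * (1 + s)) \<le> b * s^3" using bpos by (intro mult_left_mono) auto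
      moreover have "b / s^3 + b / s^2 = b * (1+s)/s^3" using s(1) by (simp add: field_simps power2_eq_square power3_eq_cube)
      moreover have "b * (1+s)/s^3 \<le> b/t^2 \<longleftrightarrow> b * (t^2 * (1 + s)) \<le> b * s^3"
        using s(1) t1 by (simp add: field_simps)
      ultimately show ?thesis by simp
    qed
    with 1 show ?thesis unfolding B_def by linarith
  qed
  have "S^2 * (W * (1 - 4 * q) + 6 * B + 2 * q^2) \<le> S^2 * (a/t)" using c2 by (intro mult_left_mono) auto
  moreover have "S^4 * (16/3 * q^3 * W + B) \<le> S^4 * (b/t^2)" using c4 by (intro mult_left_mono) auto
  moreover have "S^2 * (a/t) = a/t * S^2" "S^4 * (b/t^2) = b/t^2 * S^4" by simp_all
  ultimately have "p * (W * (S+1)^2 + B * (S+1)^4) + (1-p) * (W * (S-1)^2 + B * (S-1)^4) + (2 * q * S)^2/2 \<le>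
     a/t * S^2 + b/t^2 * S^4 + (W + B)" using L1 by linarith
  thus ?thesis unfolding W_def B_def ytau[symmetric] s_def by simp
qed



lemma harm_upper:
  assumes "1 \<le> m" "m \<le> N"
  shows "(\<Sum>j\<in>{m<..N}. 1 / real j) \<le> ln (real N) - ln (real m)"
  using assms(2)
proof (induction N rule: dec_induct)
  case base thus ?case by simp
next
  case (step n)
  have n1: "real n \<ge> 1" using step assms by simp
  have eq: "{m<..Suc n} = insert (Suc n) {m<..n}" using step by auto
  have "ln (real n / real (Suc n)) \<le> real n / real (Suc n) - 1"
    by (rule ln_le_minus_one) (use n1 in simp)
  also have "\<dots> = - (1 / real (Suc n))" by (simp add: field_simps)
  finally have "1 / real (Suc n) \<le> ln (real (Suc n)) - ln (real n)"
    using n1 by (simp add: ln_div)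
  thus ?case unfolding eq using step by simp
qed

lemma sq_sum_upper:
  assumes "1 \<le> m" "m \<le> N"
  shows "(\<Sum>j\<in>{m<..N}. 1 / (real j)^2) \<le> 1 / real m - 1 / real N"
  using assms(2)
proof (induction N rule: dec_induct)
  case base thus ?case by simp
next
  case (step n)
  have n1: "real n \<ge> 1" using step assms by simp
  have eq: "{m<..Suc n} = insert (Suc n) {m<..n}" using step by auto
  have "1 / real n - 1 / real (Suc n) = 1 / (real n * real (Suc n))"
    using n1 by (simp add: field_simps)
  moreover have "1 / (real (Suc n))^2 \<le> 1 / (real n * real (Suc n))"
    using n1 unfolding power2_eq_square by (intro divide_left_mono mult_right_mono) auto
  ultimately have "1 / (real (Suc n))^2 \<le> 1 / real n - 1 / real (Suc n)" by simp
  thus ?case unfolding eq using step by simp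
qed

lemma small_phase:
  assumes lam: "lam \<ge> 0" and t0N: "t0 \<le> N"
    and base: "\<And>S. \<bar>S\<bar> \<le> real t0 \<Longrightarrow> exp (- D) \<le> Fw (\<lambda>j. lam/(real j)^2) (N - t0) t0 S"
  shows "t \<le> t0 \<Longrightarrow> \<bar>S\<bar> \<le> real t \<Longrightarrow> exp (- (D + lam * (real t0 - real t))) \<le> Fw (\<lambda>j. lam/(real j)^2) (N - t) t S"
proof (induction "t0 - t" arbitrary: t S)
  case 0
  hence "t = t0" by simp
  thus ?case using base 0 by simp
next
  case (Suc k)
  define s where "s = Suc t"
  have tt0: "t < t0" using Suc by simp
  have IH: "exp (- (D + lam * (real t0 - real s))) \<le> Fw (\<lambda>j. lam/(real j)^2) (N - s) s S'"
    if "\<bar>S'\<bar> \<le> real s" for S'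
    using Suc.hyps(1)[of s S'] Suc.hyps(2) tt0 that s_def by simp
  have e: "exp (- lam) * exp (- (D + lam * (real t0 - real s))) \<le>
      exp (- (lam/(real s)^2 * S'^2)) * Fw (\<lambda>j. lam/(real j)^2) (N - s) s S'"
    if "\<bar>S'\<bar> \<le> real s" for S'
  proof (intro mult_mono IH that)
    have "S'^2 \<le> (real s)^2" using that by (metis abs_le_square_iff abs_of_nat)
    hence "lam/(real s)^2 * S'^2 \<le> lam/(real s)^2 * (real s)^2" using lam by (intro mult_left_mono) auto
    also have "\<dots> = lam" using s_def by simp
    finally show "exp (- lam) \<le> exp (- (lam/(real s)^2 * S'^2))" by simp
  qed auto
  have b1: "\<bar>S + 1\<bar> \<le> real s" "\<bar>S - 1\<bar> \<le> real s" using Suc.prems s_def by auto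
  have "exp (- (D + lam * (real t0 - real t))) = exp (- lam) * exp (- (D + lam * (real t0 - real s)))"
    using s_def by (simp add: exp_add[symmetric] algebra_simps)
  also have "\<dots> \<le> (exp (- ((\<lambda>j. lam/(real j)^2) (Suc t) * (S + 1)^2)) * Fw (\<lambda>j. lam/(real j)^2) (N - s) (Suc t) (S + 1) +
      exp (- ((\<lambda>j. lam/(real j)^2) (Suc t) * (S - 1)^2)) * Fw (\<lambda>j. lam/(real j)^2) (N - s) (Suc t) (S - 1)) / 2"
    using e[OF b1(1)] e[OF b1(2)] unfolding s_def by simp
  also have "\<dots> = Fw (\<lambda>j. lam/(real j)^2) (Suc (N - s)) t S" by (rule Fw_Suc[symmetric])
  also have "Suc (N - s) = N - t" using tt0 t0N s_def by simp
  finally show ?case .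
qed



lemma lap_lower:
  assumes k: "k > 0" and a: "a > k"
  shows "\<exists>C N0. \<forall>N\<ge>N0. exp (- a * ln (real N) - C) \<le> Fw (\<lambda>j. (k + 2 * k^2) / (real j)^2) N 0 0"
proof -
  define lam where "lam = k + 2 * k^2"
  define b where "b = (a - k) * (1 + 4 * k) / 6"
  have lampos: "lam > 0" unfolding lam_def using k by (simp add: add_pos_nonneg)
  have "(a - k) * (1 + 4 * k) > 0" using a k by (intro mult_pos_pos) auto
  hence bpos: "b > 0" unfolding b_def by simp
  define t0 :: nat where "t0 = nat \<lceil>max 1 (16/3 * k^3 * (lam + a) / b)\<rceil>"
  have t0a: "real t0 \<ge> 1" "real t0 \<ge> 16/3 * k^3 * (lam + a) / b" unfolding t0_def by linarith+
  have t01: "t0 \<ge> 1" using t0a by simp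
  define C where "C = a * real t0 + b * (real t0)^2 + lam + b + lam * real t0"
  show ?thesis unfolding lam_def[symmetric]
  proof (intro exI allI impI)
    fix N :: nat assume N: "N \<ge> t0"
    define w where "w = (\<lambda>j::nat. lam / (real j)^2)"
    define g where "g = (\<lambda>t::nat. \<Sum>j\<in>{t<..N}. lam / (real j)^2 + a / real j + b / (real j)^2)"
    define Phi where "Phi = (\<lambda>(t::nat) (S::real). a / real t * S^2 + b / (real t)^2 * S^4 + g t)"
    define y where "y = (\<lambda>(t::nat) (S::real). 2 * k * S / (real t + 1))"
    have step: "(1 - tanh (y t S))/2 * (w (Suc t) * (S+1)^2 + Phi (Suc t) (S+1)) +
      (1 - (1 - tanh (y t S))/2) * (w (Suc t) * (S-1)^2 + Phi (Suc t) (S-1)) + (y t S)^2/2 \<le> Phi t S"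
      if tt: "t0 \<le> t" "t < N" for t S
    proof -
      define p where "p = (1 - tanh (2 * k * S / (real t + 1)))/2"
      define W where "W = lam / (real t + 1)^2 + a / (real t + 1)"
      define B where "B = b / (real t + 1)^2"
      have t1: "real t \<ge> 1" using tt t01 by simp
      have tb: "real t + 1 \<ge> 16/3 * k^3 * (lam + a) / b" using t0a tt by simp
      have I: "p * (W * (S+1)^2 + B * (S+1)^4) + (1-p) * (W * (S-1)^2 + B * (S-1)^4) + (2 * k * S / (real t + 1))^2/2
          \<le> a / real t * S^2 + b / (real t)^2 * S^4 + W + B"
        unfolding p_def W_def B_def
        by (rule ineqL[OF t1 k a lam_def b_def tb])
      have gs: "g t = g (Suc t) + (W + B)"
      proof -
        have "{t<..N} = insert (Suc t) {Suc t<..N}" using tt by auto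
        thus ?thesis unfolding g_def W_def B_def by (simp add: add.commute add.left_commute)
      qed
      have rs: "real (Suc t) = real t + 1" by simp
      have L: "(1 - tanh (y t S))/2 * (w (Suc t) * (S+1)^2 + Phi (Suc t) (S+1)) +
        (1 - (1 - tanh (y t S))/2) * (w (Suc t) * (S-1)^2 + Phi (Suc t) (S-1)) + (y t S)^2/2 =
        p * (W * (S+1)^2 + B * (S+1)^4) + (1-p) * (W * (S-1)^2 + B * (S-1)^4) + (2 * k * S / (real t + 1))^2/2
        + g (Suc t)"
      proof -
        have 1: "w (Suc t) * x^2 + Phi (Suc t) x = W * x^2 + B * x^4 + g (Suc t)" for x
          unfolding w_def Phi_def W_def B_def rs by (simp add: algebra_simps)
        have 2: "(1 - tanh (y t S))/2 = p" unfolding p_def y_def ..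
        show ?thesis unfolding 1 2 by (simp add: y_def algebra_simps)
      qed
      have R: "Phi t S = a / real t * S^2 + b / (real t)^2 * S^4 + g (Suc t) + (W + B)"
        unfolding Phi_def gs by simp
      show ?thesis unfolding L R using I by linarith
    qed
    have PhiN: "Phi N S \<ge> 0" for S
    proof -
      have "S^4 \<ge> 0" by (simp add: zero_le_power_eq)
      hence "b / (real N)^2 * S^4 \<ge> 0" using bpos by simp
      moreover have "a / real N * S^2 \<ge> 0" using a k by simp
      ultimately show ?thesis unfolding Phi_def g_def by simp
    qed
    have lowt0: "exp (- Phi t0 S) \<le> Fw w (N - t0) t0 S" for S
      using lower_abstract[of t0 N y w Phi t0 S] step PhiN N by blast
    define D where "D = a * real t0 + b * (real t0)^2 + g t0"
    have base: "exp (- D) \<le> Fw w (N - t0) t0 S" if "\<bar>S\<bar> \<le> real t0" for S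
    proof -
      have S2: "S^2 \<le> (real t0)^2" using that by (metis abs_le_square_iff abs_of_nat)
      have S4: "S^4 \<le> (real t0)^4"
      proof -
        have "S^2 * S^2 \<le> (real t0)^2 * (real t0)^2" using S2 by (intro mult_mono) auto
        moreover have "S^4 = S^2 * S^2" "(real t0)^4 = (real t0)^2 * (real t0)^2"
          by (simp_all add: power4_eq_xxxx power2_eq_square)
        ultimately show ?thesis by linarith
      qed
      have "a / real t0 * S^2 \<le> a / real t0 * (real t0)^2" using S2 a k by (intro mult_left_mono) auto
      also have "\<dots> = a * real t0" using t0a by (simp add: power2_eq_square)
      finally have A1: "a / real t0 * S^2 \<le> a * real t0" .
      have "b / (real t0)^2 * S^4 \<le> b / (real t0)^2 * (real t0)^4" using S4 bpos by (intro mult_left_mono) auto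
      also have "\<dots> = b * (real t0)^2" using t0a by (simp add: power2_eq_square power4_eq_xxxx)
      finally have A2: "b / (real t0)^2 * S^4 \<le> b * (real t0)^2" .
      have "Phi t0 S \<le> D" unfolding Phi_def D_def using A1 A2 by simp
      hence "exp (- D) \<le> exp (- Phi t0 S)" by simp
      thus ?thesis using lowt0 by (rule order_trans)
    qed
    have fin: "exp (- (D + lam * (real t0 - real 0))) \<le> Fw w (N - 0) 0 0"
      using small_phase[of lam t0 N D 0 0] lampos N base unfolding w_def by simp
    have gb: "g t0 \<le> lam + b + a * ln (real N)"
    proof -
      have G: "g t0 = lam * (\<Sum>j\<in>{t0<..N}. 1 / (real j)^2) + a * (\<Sum>j\<in>{t0<..N}. 1 / real j) + b * (\<Sum>j\<in>{t0<..N}. 1 / (real j)^2)"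
        unfolding g_def by (simp add: sum.distrib sum_distrib_left)
      have X: "(\<Sum>j\<in>{t0<..N}. 1 / (real j)^2) \<le> 1"
      proof -
        have "(\<Sum>j\<in>{t0<..N}. 1 / (real j)^2) \<le> 1 / real t0 - 1 / real N" by (rule sq_sum_upper[OF t01 N])
        also have "\<dots> \<le> 1"
        proof -
          have "1 / real t0 \<le> 1" using t0a by simp
          moreover have "1 / real N \<ge> 0" by simp
          ultimately show ?thesis by linarith
        qed
        finally show ?thesis .
      qed
      have H: "(\<Sum>j\<in>{t0<..N}. 1 / real j) \<le> ln (real N)"
      proof -
        have "ln (real t0) \<ge> 0" using t0a by simp
        thus ?thesis using harm_upper[OF t01 N] by linarith
      qed
      have "lam * (\<Sum>j\<in>{t0<..N}. 1 / (real j)^2) \<le> lam * 1" using X lampos by (intro mult_left_mono) auto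
      moreover have "b * (\<Sum>j\<in>{t0<..N}. 1 / (real j)^2) \<le> b * 1" using X bpos by (intro mult_left_mono) auto
      moreover have "a * (\<Sum>j\<in>{t0<..N}. 1 / real j) \<le> a * ln (real N)" using H a k by (intro mult_left_mono) auto
      ultimately show ?thesis unfolding G by linarith
    qed
    have "a * ln (real N) + C \<ge> D + lam * (real t0 - real 0)"
      unfolding D_def C_def using gb by simp
    hence "exp (- a * ln (real N) - C) \<le> exp (- (D + lam * (real t0 - real 0)))" by simp
    from order_trans[OF this fin] show "exp (- a * ln (real N) - C) \<le> Fw (\<lambda>j. lam / (real j)^2) N 0 0"
      unfolding w_def by simp
  qed
qed



definition EP :: "nat \<Rightarrow> (real list \<Rightarrow> real) \<Rightarrow> real" where
  "EP n f = (\<Sum>xs\<in>sign_paths n. f xs) / 2^n"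

lemma Ex_mono: "(\<And>xs. xs \<in> sign_paths n \<Longrightarrow> f xs \<le> g xs) \<Longrightarrow> EP n f \<le> EP n g"
  unfolding EP_def by (intro divide_right_mono sum_mono) auto

lemma Ex_add: "EP n (\<lambda>xs. f xs + g xs) = EP n f + EP n g"
  unfolding EP_def by (simp add: sum.distrib add_divide_distrib)

lemma Ex_cmult: "EP n (\<lambda>xs. c * f xs) = c * EP n f"
  unfolding EP_def by (simp add: sum_distrib_left[symmetric])

lemma prob_Ex: "small_L_prob c n = EP n (\<lambda>xs. if Lstat n xs \<le> c * ln (real n) then 1 else 0)"
proof -
  have "small_L_prob c n = card (sign_paths n \<inter> {xs. Lstat n xs \<le> c * ln (real n)}) / card (sign_paths n)"
    unfolding small_L_prob_def by (rule measure_pmf_of_set[OF sign_paths_ne finite_sign_paths])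
  also have "real (card (sign_paths n \<inter> {xs. Lstat n xs \<le> c * ln (real n)})) =
      (\<Sum>xs\<in>sign_paths n. if Lstat n xs \<le> c * ln (real n) then 1 else (0::real))"
    using finite_sign_paths[of n] by (simp add: sum.If_cases Int_def)
  finally show ?thesis unfolding EP_def card_sign_paths by simp
qed

lemma Lap_Ex: "Fw (\<lambda>j. lam / (real j)^2) n 0 0 = EP n (\<lambda>xs. exp (- lam * Lstat n xs))"
proof -
  have "(\<Sum>j<n. lam / (real (0 + Suc j))^2 * (0 + walk xs (Suc j))^2) = lam * Lstat n xs" for xs
  proof -
    have "Lstat n xs = (\<Sum>j<n. (walk xs (Suc j))^2 / (real (Suc j))^2)"
      unfolding Lstat_def using sum.atLeast1_atMost_eq[of "\<lambda>i. (walk xs i)^2 / (real i)^2" n] by simp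
    thus ?thesis by (simp add: sum_distrib_left)
  qed
  thus ?thesis unfolding Fw_def EP_def by simp
qed

lemma prob_upper:
  assumes "lam \<ge> 0"
  shows "small_L_prob c n \<le> exp (lam * c * ln (real n)) * Fw (\<lambda>j. lam / (real j)^2) n 0 0"
proof -
  have "small_L_prob c n \<le> EP n (\<lambda>xs. exp (lam * c * ln (real n)) * exp (- lam * Lstat n xs))"
    unfolding prob_Ex
  proof (rule Ex_mono)
    fix xs
    show "(if Lstat n xs \<le> c * ln (real n) then 1 else 0) \<le> exp (lam * c * ln (real n)) * exp (- lam * Lstat n xs)"
    proof (cases "Lstat n xs \<le> c * ln (real n)")
      case True
      hence "lam * Lstat n xs \<le> lam * (c * ln (real n))" using assms by (intro mult_left_mono) auto
      hence "0 \<le> lam * c * ln (real n) + - lam * Lstat n xs" by (simp add: algebra_simps)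
      hence "1 \<le> exp (lam * c * ln (real n) + - lam * Lstat n xs)" by simp
      also have "\<dots> = exp (lam * c * ln (real n)) * exp (- lam * Lstat n xs)" by (rule exp_add)
      finally show ?thesis using True by simp
    qed simp
  qed
  thus ?thesis unfolding Lap_Ex Ex_cmult .
qed

lemma prob_lower:
  assumes "lam1 \<le> lam" "lam \<le> lam2" "0 \<le> lam"
  shows "Fw (\<lambda>j. lam / (real j)^2) n 0 0 \<le>
    exp (- lam * c1 * ln (real n)) * small_L_prob c n
    + exp (- (lam - lam1) * c * ln (real n)) * Fw (\<lambda>j. lam1 / (real j)^2) n 0 0
    + exp ((lam2 - lam) * c1 * ln (real n)) * Fw (\<lambda>j. lam2 / (real j)^2) n 0 0"
proof -
  define T where "T = ln (real n)"
  have "EP n (\<lambda>xs. exp (- lam * Lstat n xs)) \<le> EP n (\<lambda>xs.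
      exp (- lam * c1 * T) * (if Lstat n xs \<le> c * T then 1 else 0)
    + exp (- (lam - lam1) * c * T) * exp (- lam1 * Lstat n xs)
    + exp ((lam2 - lam) * c1 * T) * exp (- lam2 * Lstat n xs))"
  proof (rule Ex_mono)
    fix xs
    define L where "L = Lstat n xs"
    have nn: "0 \<le> exp (- lam * c1 * T) * (if L \<le> c * T then 1 else 0)"
      "0 \<le> exp (- (lam - lam1) * c * T) * exp (- lam1 * L)"
      "0 \<le> exp ((lam2 - lam) * c1 * T) * exp (- lam2 * L)" by auto
    have "exp (- lam * L) \<le> exp (- lam * c1 * T) * (if L \<le> c * T then 1 else 0)
    + exp (- (lam - lam1) * c * T) * exp (- lam1 * L)
    + exp ((lam2 - lam) * c1 * T) * exp (- lam2 * L)"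
    proof (cases "L \<le> c * T")
      case False
      hence "(lam - lam1) * (c * T) \<le> (lam - lam1) * L" using assms by (intro mult_left_mono) auto
      hence "exp (- lam * L) \<le> exp (- (lam - lam1) * c * T) * exp (- lam1 * L)"
        by (simp add: exp_add[symmetric] algebra_simps)
      thus ?thesis using nn by linarith
    next
      case True
      show ?thesis
      proof (cases "L < c1 * T")
        case True
        hence "(lam2 - lam) * L \<le> (lam2 - lam) * (c1 * T)" using assms by (intro mult_left_mono) auto
        hence "exp (- lam * L) \<le> exp ((lam2 - lam) * c1 * T) * exp (- lam2 * L)"
          by (simp add: exp_add[symmetric] algebra_simps)
        thus ?thesis using nn by linarith
      next
        case False
        hence "lam * (c1 * T) \<le> lam * L" using assms by (intro mult_left_mono) auto
        hence "exp (- lam * L) \<le> exp (- lam * c1 * T) * (if L \<le> c * T then 1 else 0)"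
          using True by simp
        thus ?thesis using nn by linarith
      qed
    qed
    thus "exp (- lam * Lstat n xs) \<le> exp (- lam * c1 * T) * (if Lstat n xs \<le> c * T then 1 else 0)
    + exp (- (lam - lam1) * c * T) * exp (- lam1 * Lstat n xs)
    + exp ((lam2 - lam) * c1 * T) * exp (- lam2 * Lstat n xs)" unfolding L_def .
  qed
  thus ?thesis unfolding Lap_Ex Ex_add Ex_cmult prob_Ex T_def .
qed



definition kap :: "real \<Rightarrow> real" where "kap x = (1 - x) / (4 * x)"
definition lamf :: "real \<Rightarrow> real" where "lamf x = kap x + 2 * (kap x)^2"

lemma kap_pos: "0 < x \<Longrightarrow> x < 1 \<Longrightarrow> kap x > 0"
  unfolding kap_def by simp

lemma lamf_pos: "0 < x \<Longrightarrow> x < 1 \<Longrightarrow> lamf x > 0"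
  unfolding lamf_def using kap_pos by (simp add: add_pos_nonneg)

lemma lamf_eq: "0 < x \<Longrightarrow> lamf x = (1 - x^2) / (8 * x^2)"
  unfolding lamf_def kap_def by (simp add: field_simps power2_eq_square)

lemma kap_anti: "0 < x \<Longrightarrow> x < y \<Longrightarrow> kap y < kap x"
proof -
  assume xy: "0 < x" "x < y"
  have "kap x = 1 / (4 * x) - 1/4" "kap y = 1 / (4 * y) - 1/4" using xy unfolding kap_def by (simp_all add: field_simps)
  moreover have "1 / (4 * y) < 1 / (4 * x)" using xy by (intro divide_strict_left_mono) auto
  ultimately show ?thesis by simp
qed

lemma lamf_anti: "0 < x \<Longrightarrow> x < y \<Longrightarrow> lamf y < lamf x"
proof -
  assume xy: "0 < x" "x < y"
  have "lamf x = 1 / (8 * x^2) - 1/8" "lamf y = 1 / (8 * y^2) - 1/8"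
    using xy by (simp_all add: lamf_eq field_simps)
  moreover have "x^2 < y^2" using xy by (intro power_strict_mono) auto
  hence "1 / (8 * y^2) < 1 / (8 * x^2)" using xy by (intro divide_strict_left_mono) auto
  ultimately show ?thesis by simp
qed

lemma Kid: "0 < y \<Longrightarrow> Krate y = kap y - lamf y * y"
  unfolding Krate_def lamf_def kap_def by (simp add: field_simps power2_eq_square)

lemma Gid: "0 < x \<Longrightarrow> 0 < y \<Longrightarrow> lamf x * y - kap x = lamf y * y - kap y + (y - x)^2 / (8 * y * x^2)"
  unfolding lamf_def kap_def by (simp add: field_simps power2_eq_square)

lemma Kdiff: "0 < x \<Longrightarrow> 0 < y \<Longrightarrow> Krate x - Krate y = (y - x) * (1 - x * y) / (8 * x * y)"
  unfolding Krate_def by (simp add: field_simps power2_eq_square)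

lemma ev_lnT: "eventually (\<lambda>n. M \<le> ln (real n)) sequentially"
proof -
  have "\<forall>n\<ge>nat \<lceil>exp M\<rceil>. M \<le> ln (real n)"
  proof (intro allI impI)
    fix n :: nat assume "n \<ge> nat \<lceil>exp M\<rceil>"
    hence "exp M \<le> real n" by linarith
    moreover have "0 < exp M" by simp
    ultimately have "0 < real n" by linarith
    hence "ln (exp M) \<le> ln (real n)" using \<open>exp M \<le> real n\<close> by (subst ln_le_cancel_iff) auto
    thus "M \<le> ln (real n)" by simp
  qed
  thus ?thesis unfolding eventually_sequentially by blast
qed

lemma exp_le_div: fixes x y r :: real shows "x + ln r \<le> y \<Longrightarrow> r > 0 \<Longrightarrow> exp x \<le> exp y / r"
proof -
  assume "x + ln r \<le> y" "r > 0"
  hence "exp (x + ln r) \<le> exp y" by simp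
  thus ?thesis using \<open>r > 0\<close> by (simp add: exp_add field_simps)
qed



lemma upper_asym:
  assumes c: "0 < c" "c < 1" and d: "delta > 0"
  shows "eventually (\<lambda>n. small_L_prob c n \<le> exp (- (Krate c - delta) * ln (real n))) sequentially"
proof -
  define k where "k = kap c"
  define lam where "lam = lamf c"
  have k0: "k > 0" unfolding k_def using kap_pos c by simp
  define d where "d = min (delta/2) (k/2)"
  have d0: "d > 0" "d \<le> delta/2" "d \<le> k/2" unfolding d_def using d k0 by auto
  define beta where "beta = k - d"
  have b0: "beta > 0" "beta < k" unfolding beta_def using d0 by auto
  have "beta^2 < k^2" using b0 by (intro power_strict_mono) auto
  hence cond: "lam - beta - 2 * beta^2 > 0" unfolding lam_def lamf_def k_def[symmetric] using b0 by simp
  obtain C where C: "\<forall>N\<ge>1. Fw (\<lambda>j. lam/(real j)^2) N 0 0 \<le> exp (- beta * ln (real N) + C)"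
    using lap_upper[OF b0(1) cond] by blast
  have lam0: "lam \<ge> 0" unfolding lam_def using lamf_pos c by (simp add: less_imp_le)
  have K: "Krate c = k - lam * c" unfolding k_def lam_def using Kid c by simp
  have ev: "eventually (\<lambda>n. C / (delta - d) \<le> ln (real n)) sequentially" by (rule ev_lnT)
  have ev1: "eventually (\<lambda>n. n \<ge> 1) sequentially" by (rule eventually_ge_at_top)
  show ?thesis
    using ev ev1
  proof eventually_elim
    case (elim n)
    define T where "T = ln (real n)"
    have dd: "delta - d > 0" using d0 d by simp
    have CT: "C \<le> (delta - d) * T" using elim(1) dd unfolding T_def by (simp add: field_simps)
    have "small_L_prob c n \<le> exp (lam * c * T) * Fw (\<lambda>j. lam/(real j)^2) n 0 0"
      unfolding T_def by (rule prob_upper[OF lam0])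
    also have "\<dots> \<le> exp (lam * c * T) * exp (- beta * T + C)"
      using C elim(2) unfolding T_def by (intro mult_left_mono) auto
    also have "\<dots> = exp (lam * c * T - beta * T + C)" by (simp add: exp_add[symmetric])
    also have "\<dots> \<le> exp (- (Krate c - delta) * T)"
    proof -
      have "lam * c * T - beta * T + C \<le> - (Krate c - delta) * T"
        using CT unfolding K beta_def by (simp add: algebra_simps)
      thus ?thesis by simp
    qed
    finally show ?case unfolding T_def .
  qed
qed



lemma lower_asym:
  assumes c: "0 < c" "c < 1" and d: "delta > 0"
  shows "eventually (\<lambda>n. exp (- (Krate c + delta) * ln (real n)) \<le> small_L_prob c n) sequentially"
proof -
  define h where "h = min (c/2) (2 * c^2 * delta)"
  have h0: "h > 0" "h \<le> c/2" "h \<le> 2 * c^2 * delta" unfolding h_def using c d by auto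
  define c1 where "c1 = c - h"
  define c0 where "c0 = c - h/2"
  have cs: "0 < c1" "c1 < c0" "c0 < c" "c1 \<ge> c/2" unfolding c1_def c0_def using h0 c by auto
  define k where "k = kap c0"
  define lam where "lam = lamf c0"
  define k1 where "k1 = kap c"
  define lam1 where "lam1 = lamf c"
  define k2 where "k2 = kap c1"
  define lam2 where "lam2 = lamf c1"
  have k0: "k > 0" unfolding k_def using kap_pos cs c by simp
  have k10: "k1 > 0" unfolding k1_def using kap_pos c by simp
  have k12: "k1 < k2" unfolding k1_def k2_def using kap_anti cs c by simp
  have l01: "lam1 < lam" unfolding lam1_def lam_def using lamf_anti cs by simp
  have l02: "lam < lam2" unfolding lam2_def lam_def using lamf_anti cs by simp
  have lam0: "lam \<ge> 0" unfolding lam_def using lamf_pos cs c by (simp add: less_imp_le)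
  define mA where "mA = (c - c0)^2 / (8 * c * c0^2)"
  define mB where "mB = (c1 - c0)^2 / (8 * c1 * c0^2)"
  have mA0: "mA > 0" unfolding mA_def using cs c by simp
  have mB0: "mB > 0" unfolding mB_def using cs c by simp
  have GA: "lam * c - k = lam1 * c - k1 + mA"
    unfolding lam_def k_def lam1_def k1_def mA_def by (rule Gid) (use cs c in auto)
  have GB: "lam * c1 - k = lam2 * c1 - k2 + mB"
    unfolding lam_def k_def lam2_def k2_def mB_def by (rule Gid) (use cs c in auto)
  have K1: "Krate c1 = k2 - lam2 * c1" unfolding k2_def lam2_def using Kid cs by simp
  have Kc1: "Krate c1 \<le> Krate c + delta/2"
  proof -
    have "Krate c1 - Krate c = (c - c1) * (1 - c1 * c) / (8 * c1 * c)" using Kdiff cs c by simp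
    also have "\<dots> \<le> (c - c1) / (8 * c1 * c)"
    proof -
      have "(c - c1) * (1 - c1 * c) \<le> (c - c1) * 1" using cs c by (intro mult_left_mono) auto
      thus ?thesis using cs c by (intro divide_right_mono) auto
    qed
    also have "\<dots> \<le> h / (8 * (c/2) * c)"
    proof -
      have "8 * (c/2) * c \<le> 8 * c1 * c" using cs c by simp
      moreover have "0 < 8 * (c/2) * c" using c by simp
      ultimately show ?thesis unfolding c1_def using h0 by (intro frac_le) auto
    qed
    also have "\<dots> \<le> delta / 2" using h0 c by (simp add: field_simps power2_eq_square)
    finally show ?thesis by simp
  qed
  define eta where "eta = min (min (mA/4) (mB/4)) (min (delta/8) (k1/2))"
  have e0: "eta > 0" "eta \<le> mA/4" "eta \<le> mB/4" "eta \<le> delta/8" "eta \<le> k1/2"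
    unfolding eta_def using mA0 mB0 d k10 by auto
  obtain C0 N0 where C0: "\<forall>N\<ge>N0. exp (- (k + eta) * ln (real N) - C0) \<le> Fw (\<lambda>j. lam / (real j)^2) N 0 0"
    using lap_lower[of k "k + eta"] k0 e0 unfolding lam_def lamf_def k_def by auto
  define b1 where "b1 = k1 - eta"
  define b2 where "b2 = k2 - eta"
  have b10: "b1 > 0" "b1 < k1" unfolding b1_def using e0 by auto
  have b20: "b2 > 0" "b2 < k2" unfolding b2_def using e0 k12 by auto
  have cond1: "lam1 - b1 - 2 * b1^2 > 0"
  proof -
    have "b1^2 < k1^2" using b10 by (intro power_strict_mono) auto
    thus ?thesis unfolding lam1_def lamf_def k1_def[symmetric] using b10 by simp
  qed
  have cond2: "lam2 - b2 - 2 * b2^2 > 0"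
  proof -
    have "b2^2 < k2^2" using b20 by (intro power_strict_mono) auto
    thus ?thesis unfolding lam2_def lamf_def k2_def[symmetric] using b20 by simp
  qed
  obtain C1 where C1: "\<forall>N\<ge>1. Fw (\<lambda>j. lam1/(real j)^2) N 0 0 \<le> exp (- b1 * ln (real N) + C1)"
    using lap_upper[OF b10(1) cond1] by blast
  obtain C2 where C2: "\<forall>N\<ge>1. Fw (\<lambda>j. lam2/(real j)^2) N 0 0 \<le> exp (- b2 * ln (real N) + C2)"
    using lap_upper[OF b20(1) cond2] by blast
  have pA: "mA - 2 * eta > 0" and pB: "mB - 2 * eta > 0" and pD: "delta/2 - eta > 0" using e0 by auto
  have ev: "eventually (\<lambda>n. (C1 + C0 + ln 4) / (mA - 2 * eta) \<le> ln (real n)) sequentially"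
    "eventually (\<lambda>n. (C2 + C0 + ln 4) / (mB - 2 * eta) \<le> ln (real n)) sequentially"
    "eventually (\<lambda>n. (C0 + ln 2) / (delta/2 - eta) \<le> ln (real n)) sequentially"
    "eventually (\<lambda>n. 0 \<le> ln (real n)) sequentially"
    "eventually (\<lambda>n. n \<ge> max N0 1) sequentially"
    by (rule ev_lnT eventually_ge_at_top)+
  show ?thesis
    using ev
  proof eventually_elim
    case (elim n)
    define T where "T = ln (real n)"
    have T0: "T \<ge> 0" using elim(4) unfolding T_def .
    have iA: "C1 + C0 + ln 4 \<le> (mA - 2 * eta) * T" using elim(1) pA unfolding T_def by (simp add: field_simps)
    have iB: "C2 + C0 + ln 4 \<le> (mB - 2 * eta) * T" using elim(2) pB unfolding T_def by (simp add: field_simps)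
    have iD: "C0 + ln 2 \<le> (delta/2 - eta) * T" using elim(3) pD unfolding T_def by (simp add: field_simps)
    have n1: "n \<ge> 1" "n \<ge> N0" using elim(5) by auto
    define A0 where "A0 = exp (- (k + eta) * T - C0)"
    have LA: "A0 \<le> Fw (\<lambda>j. lam / (real j)^2) n 0 0" using C0 n1 unfolding A0_def T_def by auto
    have t2: "exp (- (lam - lam1) * c * T) * Fw (\<lambda>j. lam1 / (real j)^2) n 0 0 \<le> A0 / 4"
    proof -
      have "exp (- (lam - lam1) * c * T) * Fw (\<lambda>j. lam1 / (real j)^2) n 0 0 \<le>
          exp (- (lam - lam1) * c * T) * exp (- b1 * T + C1)"
        using C1 n1 unfolding T_def by (intro mult_left_mono) auto
      also have "\<dots> = exp (- (lam - lam1) * c * T + (- b1 * T + C1))" by (simp add: exp_add)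
      also have "\<dots> \<le> A0 / 4" unfolding A0_def
      proof (rule exp_le_div)
        have e1: "(lam - lam1) * c + b1 = k + mA - eta" using GA unfolding b1_def by (simp add: algebra_simps)
        have "- (lam - lam1) * c * T + (- b1 * T + C1) = - ((lam - lam1) * c + b1) * T + C1"
          by (simp add: algebra_simps)
        also have "\<dots> = - (k + mA - eta) * T + C1" unfolding e1 ..
        finally have "- (lam - lam1) * c * T + (- b1 * T + C1) = - (k + mA - eta) * T + C1" .
        moreover have "- (k + mA - eta) * T + C1 + ln 4 \<le> - (k + eta) * T - C0"
          using iA by (simp add: algebra_simps)
        ultimately show "- (lam - lam1) * c * T + (- b1 * T + C1) + ln 4 \<le> - (k + eta) * T - C0" by simp
      qed simp
      finally show ?thesis .
    qed
    have t3: "exp ((lam2 - lam) * c1 * T) * Fw (\<lambda>j. lam2 / (real j)^2) n 0 0 \<le> A0 / 4"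
    proof -
      have "exp ((lam2 - lam) * c1 * T) * Fw (\<lambda>j. lam2 / (real j)^2) n 0 0 \<le>
          exp ((lam2 - lam) * c1 * T) * exp (- b2 * T + C2)"
        using C2 n1 unfolding T_def by (intro mult_left_mono) auto
      also have "\<dots> = exp ((lam2 - lam) * c1 * T + (- b2 * T + C2))" by (simp add: exp_add)
      also have "\<dots> \<le> A0 / 4" unfolding A0_def
      proof (rule exp_le_div)
        have e1: "b2 - (lam2 - lam) * c1 = k + mB - eta" using GB unfolding b2_def by (simp add: algebra_simps)
        have "(lam2 - lam) * c1 * T + (- b2 * T + C2) = - (b2 - (lam2 - lam) * c1) * T + C2"
          by (simp add: algebra_simps)
        also have "\<dots> = - (k + mB - eta) * T + C2" unfolding e1 ..
        finally have "(lam2 - lam) * c1 * T + (- b2 * T + C2) = - (k + mB - eta) * T + C2" .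
        moreover have "- (k + mB - eta) * T + C2 + ln 4 \<le> - (k + eta) * T - C0"
          using iB by (simp add: algebra_simps)
        ultimately show "(lam2 - lam) * c1 * T + (- b2 * T + C2) + ln 4 \<le> - (k + eta) * T - C0" by simp
      qed simp
      finally show ?thesis .
    qed
    have PL: "Fw (\<lambda>j. lam / (real j)^2) n 0 0 \<le>
      exp (- lam * c1 * T) * small_L_prob c n
      + exp (- (lam - lam1) * c * T) * Fw (\<lambda>j. lam1 / (real j)^2) n 0 0
      + exp ((lam2 - lam) * c1 * T) * Fw (\<lambda>j. lam2 / (real j)^2) n 0 0"
      unfolding T_def by (rule prob_lower) (use l01 l02 lam0 in auto)
    have half: "A0 / 2 \<le> exp (- lam * c1 * T) * small_L_prob c n" using PL LA t2 t3 by linarith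
    hence "exp (lam * c1 * T) * (A0 / 2) \<le> exp (lam * c1 * T) * (exp (- lam * c1 * T) * small_L_prob c n)"
      by (intro mult_left_mono) auto
    also have "\<dots> = small_L_prob c n" by (simp add: mult.assoc[symmetric] exp_add[symmetric])
    finally have P1: "exp (lam * c1 * T) * (A0 / 2) \<le> small_L_prob c n" .
    have "exp (- (Krate c + delta) * T) \<le> exp (lam * c1 * T) * (A0 / 2)"
    proof -
      have "exp (lam * c1 * T) * (A0 / 2) = exp (lam * c1 * T - (k + eta) * T - C0) / 2"
        unfolding A0_def by (simp add: exp_add[symmetric] exp_diff algebra_simps)
      moreover have "exp (- (Krate c + delta) * T) \<le> exp (lam * c1 * T - (k + eta) * T - C0) / 2"
      proof (rule exp_le_div)
        have kk: "k - lam * c1 \<le> Krate c1" using GB K1 mB0 by linarith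
        have "(k - lam * c1) * T \<le> Krate c1 * T" using kk T0 by (rule mult_right_mono)
        moreover have "Krate c1 * T \<le> (Krate c + delta/2) * T" using Kc1 T0 by (rule mult_right_mono)
        ultimately have "(k - lam * c1) * T \<le> (Krate c + delta/2) * T" by linarith
        thus "- (Krate c + delta) * T + ln 2 \<le> lam * c1 * T - (k + eta) * T - C0"
          using iD by (simp add: algebra_simps)
      qed simp
      ultimately show ?thesis by simp
    qed
    with P1 show ?case unfolding T_def by linarith
  qed
qed



theorem theorem1p1:
  fixes c :: real
  assumes "0 < c" and "c < 1"
  shows "\<exists>\<epsilon> :: nat \<Rightarrow> real. \<epsilon> \<longlonglongrightarrow> 0 \<and>
           (\<forall>\<^sub>F n in sequentially.
              small_L_prob c n = exp (- (Krate c + \<epsilon> n) * ln (real n)))"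
proof -
  define P where "P = (\<lambda>n. small_L_prob c n)"
  define K where "K = Krate c"
  define eps where "eps = (\<lambda>n. if P n > 0 \<and> n \<ge> 2 then - ln (P n) / ln (real n) - K else 0)"
  have good: "eventually (\<lambda>n. P n > 0 \<and> n \<ge> 2) sequentially"
  proof -
    have "eventually (\<lambda>n. exp (- (Krate c + 1) * ln (real n)) \<le> small_L_prob c n) sequentially"
      by (rule lower_asym[OF assms]) simp
    moreover have "eventually (\<lambda>n. n \<ge> (2::nat)) sequentially" by (rule eventually_ge_at_top)
    ultimately show ?thesis
    proof eventually_elim
      case (elim n)
      have "0 < exp (- (Krate c + 1) * ln (real n))" by simp
      thus ?case using elim unfolding P_def by linarith
    qed
  qed
  have lim: "eps \<longlonglongrightarrow> 0"
    unfolding tendsto_iff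
  proof (intro allI impI)
    fix e :: real assume e: "e > 0"
    have "eventually (\<lambda>n. small_L_prob c n \<le> exp (- (Krate c - e/2) * ln (real n))) sequentially"
      by (rule upper_asym[OF assms]) (use e in simp)
    moreover have "eventually (\<lambda>n. exp (- (Krate c + e/2) * ln (real n)) \<le> small_L_prob c n) sequentially"
      by (rule lower_asym[OF assms]) (use e in simp)
    ultimately show "eventually (\<lambda>n. dist (eps n) 0 < e) sequentially"
      using good
    proof eventually_elim
      case (elim n)
      define T where "T = ln (real n)"
      have T0: "T > 0" unfolding T_def using elim(3) by simp
      have Pp: "P n > 0" using elim(3) by simp
      have u: "ln (P n) \<le> - (K - e/2) * T"
        using elim(1) Pp unfolding P_def K_def T_def by (metis ln_exp ln_le_cancel_iff exp_gt_zero)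
      have l: "- (K + e/2) * T \<le> ln (P n)"
        using elim(2) Pp unfolding P_def K_def T_def by (metis ln_exp ln_le_cancel_iff exp_gt_zero)
      have epsn: "eps n = - ln (P n) / T - K" unfolding eps_def T_def using elim(3) by simp
      have z1: "- ln (P n) / T \<ge> K - e/2" using u T0 by (simp add: field_simps)
      have z2: "- ln (P n) / T \<le> K + e/2" using l T0 by (simp add: field_simps)
      have "\<bar>eps n\<bar> \<le> e/2" unfolding epsn using z1 z2 by (intro abs_leI) linarith+
      thus ?case using e by simp
    qed
  qed
  have eq: "eventually (\<lambda>n. small_L_prob c n = exp (- (Krate c + eps n) * ln (real n))) sequentially"
    using good
  proof eventually_elim
    case (elim n)
    have T0: "ln (real n) > 0" using elim by simp
    have "- (Krate c + eps n) * ln (real n) = ln (P n)"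
      unfolding eps_def K_def using elim T0 by (simp add: field_simps)
    thus ?case using elim unfolding P_def by simp
  qed
  show ?thesis using lim eq by blast
qed


end
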